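(* Let $\mathcal X$ be a separable metric space with at least two points, $\Omega=\mathcal X^{\mathbb N}$ with the product topology, and $\Sigma$ a $\sigma$-algebra on $\Omega$ containing all open sets. For every finitely additive probability $P$ on $(\Omega,\Sigma)$ there exists a strongly nonatomic finitely additive probability $\widetilde P$ on $(\Omega,\Sigma)$ such that $P(U)\le\widetilde P(U)$ for every open set $U\subseteq\Omega$.
   Context: A finitely additive probability $P$ on $(\Omega,\Sigma)$ is strongly nonatomic if for every $E\in\Sigma$ and $\alpha\in[0,1]$ there is $F\in\Sigma$ with $F\subseteq E$ and $P(F)=\alpha P(E)$. *)

theory Defs
  imports "HOL-Analysis.Analysis"
begin

definition fa_probability :: "'w set set \<Rightarrow> ('w set \<Rightarrow> real) \<Rightarrow> bool" where
  "fa_probability S P \<longleftrightarrow>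
     (\<forall>A\<in>S. 0 \<le> P A) \<and> P UNIV = 1 \<and>
     (\<forall>A\<in>S. \<forall>B\<in>S. A \<inter> B = {} \<longrightarrow> P (A \<union> B) = P A + P B)"

definition strongly_nonatomic :: "'w set set \<Rightarrow> ('w set \<Rightarrow> real) \<Rightarrow> bool" where
  "strongly_nonatomic S P \<longleftrightarrow>
     (\<forall>E\<in>S. \<forall>\<alpha>::real. 0 \<le> \<alpha> \<and> \<alpha> \<le> 1 \<longrightarrow> (\<exists>F\<in>S. F \<subseteq> E \<and> P F = \<alpha> * P E))"

end

theory Submission
  imports Defs
begin


definition ultra :: "'i filter \<Rightarrow> bool" where
  "ultra U \<longleftrightarrow> U \<noteq> bot \<and> (\<forall>P. eventually P U \<or> eventually (\<lambda>x. \<not> P x) U)"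

lemma ultra_exists:
  fixes F :: "'i filter"
  assumes F: "F \<noteq> bot"
  shows "\<exists>U. U \<le> F \<and> ultra U"
proof -
  define fam where "fam E \<longleftrightarrow> UNIV \<in> E \<and> {} \<notin> E \<and> (\<forall>X\<in>E. \<forall>Y\<in>E. X \<inter> Y \<in> E) \<and> (\<forall>X\<in>E. \<forall>Y. X \<subseteq> Y \<longrightarrow> Y \<in> E)"
    for E :: "'i set set"
  define E0 where "E0 = {X. eventually (\<lambda>x. x \<in> X) F}"
  define A where "A = {E. fam E \<and> E0 \<subseteq> E}"
  have E0A: "E0 \<in> A"
  proof -
    have "{} \<notin> E0" using F by (simp add: E0_def trivial_limit_def)
    moreover have "\<forall>X\<in>E0. \<forall>Y\<in>E0. X \<inter> Y \<in> E0"
      by (auto simp: E0_def eventually_conj_iff)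
    moreover have "\<forall>X\<in>E0. \<forall>Y. X \<subseteq> Y \<longrightarrow> Y \<in> E0"
      by (auto simp: E0_def elim: eventually_mono)
    ultimately show ?thesis by (auto simp: A_def fam_def E0_def)
  qed
  have "\<exists>M\<in>A. \<forall>X\<in>A. M \<subseteq> X \<longrightarrow> X = M"
  proof (rule subset_Zorn)
    fix C assume C: "subset.chain A C"
    show "\<exists>U\<in>A. \<forall>X\<in>C. X \<subseteq> U"
    proof (cases "C = {}")
      case True then show ?thesis using E0A by auto
    next
      case False
      have CA: "C \<subseteq> A" using C by (simp add: subset_chain_def)
      have tot: "\<And>X Y. X\<in>C \<Longrightarrow> Y\<in>C \<Longrightarrow> X \<subseteq> Y \<or> Y \<subseteq> X" using C by (simp add: subset_chain_def)
      have famC: "\<And>E. E \<in> C \<Longrightarrow> fam E \<and> E0 \<subseteq> E" using CA by (auto simp: A_def)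
      have "\<Union>C \<in> A"
      proof -
        have 1: "UNIV \<in> \<Union>C" using False famC by (auto simp: fam_def)
        have 2: "{} \<notin> \<Union>C" using famC by (auto simp: fam_def)
        have 3: "\<forall>X\<in>\<Union>C. \<forall>Y\<in>\<Union>C. X \<inter> Y \<in> \<Union>C"
        proof (intro ballI)
          fix X Y assume "X \<in> \<Union>C" "Y \<in> \<Union>C"
          then obtain E1 E2 where e: "E1 \<in> C" "E2 \<in> C" "X \<in> E1" "Y \<in> E2" by auto
          from tot[OF e(1,2)] show "X \<inter> Y \<in> \<Union>C"
          proof
            assume "E1 \<subseteq> E2" then show ?thesis using e famC[of E2] by (auto simp: fam_def)
          next
            assume "E2 \<subseteq> E1" then show ?thesis using e famC[of E1] by (auto simp: fam_def)
          qed
        qed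
        have 4: "\<forall>X\<in>\<Union>C. \<forall>Y. X \<subseteq> Y \<longrightarrow> Y \<in> \<Union>C"
          using famC by (simp add: fam_def) blast
        have 5: "E0 \<subseteq> \<Union>C" using False famC by blast
        show ?thesis using 1 2 3 4 5 by (simp add: A_def fam_def)
      qed
      then show ?thesis by blast
    qed
  qed
  then obtain M where MA: "M \<in> A" and Mmax: "\<And>X. X\<in>A \<Longrightarrow> M \<subseteq> X \<Longrightarrow> X = M" by blast
  have famM: "fam M" and E0M: "E0 \<subseteq> M" using MA by (auto simp: A_def)
  have ult: "X \<in> M \<or> - X \<in> M" for X
  proof (cases "\<exists>Z\<in>M. Z \<inter> X = {}")
    case True
    then obtain Z where "Z \<in> M" "Z \<subseteq> - X" by auto
    then show ?thesis using famM by (auto simp: fam_def)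
  next
    case False
    define M' where "M' = {Y. \<exists>Z\<in>M. Z \<inter> X \<subseteq> Y}"
    have "M \<subseteq> M'" by (auto simp: M'_def)
    moreover have "M' \<in> A"
    proof -
      have "fam M'"
        unfolding fam_def
      proof (intro conjI ballI allI impI)
        show "UNIV \<in> M'" using famM by (auto simp: M'_def fam_def)
        show "{} \<notin> M'" using False by (auto simp: M'_def)
      next
        fix Y1 Y2 assume "Y1 \<in> M'" "Y2 \<in> M'"
        then obtain Z1 Z2 where "Z1 \<in> M" "Z2 \<in> M" "Z1 \<inter> X \<subseteq> Y1" "Z2 \<inter> X \<subseteq> Y2"
          by (auto simp: M'_def)
        moreover have "Z1 \<inter> Z2 \<in> M" using famM \<open>Z1 \<in> M\<close> \<open>Z2 \<in> M\<close> by (auto simp: fam_def)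
        ultimately show "Y1 \<inter> Y2 \<in> M'" unfolding M'_def by blast
      next
        fix Y1 Y2 assume "Y1 \<in> M'" "Y1 \<subseteq> Y2"
        then show "Y2 \<in> M'" by (auto simp: M'_def)
      qed
      then show ?thesis using E0M \<open>M \<subseteq> M'\<close> by (auto simp: A_def)
    qed
    ultimately have "M' = M" using Mmax by blast
    moreover have "X \<in> M'" using famM by (auto simp: M'_def fam_def)
    ultimately show ?thesis by simp
  qed
  have isf: "is_filter (\<lambda>P. {x. P x} \<in> M)"
  proof
    show "{x. True} \<in> M" using famM by (simp add: fam_def)
  next
    fix P Q assume "{x. P x} \<in> M" "{x. Q x} \<in> M"
    then have "{x. P x} \<inter> {x. Q x} \<in> M" using famM by (simp add: fam_def)
    then show "{x. P x \<and> Q x} \<in> M" by (simp add: Collect_conj_eq)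
  next
    fix P Q assume a: "\<forall>x. P x \<longrightarrow> Q x" "{x. P x} \<in> M"
    have up: "\<forall>X\<in>M. \<forall>Y. X \<subseteq> Y \<longrightarrow> Y \<in> M" using famM by (simp add: fam_def)
    have "{x. P x} \<subseteq> {x. Q x}" using a(1) by blast
    then show "{x. Q x} \<in> M" using up a(2) by blast
  qed
  define U where "U = Abs_filter (\<lambda>P. {x. P x} \<in> M)"
  have ev: "eventually P U \<longleftrightarrow> {x. P x} \<in> M" for P
    unfolding U_def by (simp add: eventually_Abs_filter[OF isf])
  have "U \<le> F"
    unfolding le_filter_def ev using E0M by (auto simp: E0_def)
  moreover have "ultra U"
    unfolding ultra_def
  proof (intro conjI allI)
    show "U \<noteq> bot" using famM by (simp add: trivial_limit_def ev fam_def)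
  next
    fix P show "eventually P U \<or> eventually (\<lambda>x. \<not> P x) U"
      using ult[of "{x. P x}"] by (simp add: ev Compl_eq)
  qed
  ultimately show ?thesis by blast
qed

definition ulim :: "'i filter \<Rightarrow> ('i \<Rightarrow> real) \<Rightarrow> real" where
  "ulim U f = (SOME l. (f \<longlongrightarrow> l) U)"

lemma ultra_conv:
  assumes U: "ultra U" and f: "\<And>i. f i \<in> {a..b}"
  shows "(f \<longlongrightarrow> ulim U f) U"
proof -
  have nb: "U \<noteq> bot" using U by (simp add: ultra_def)
  have "filtermap f U \<noteq> bot" using nb by (simp add: filtermap_bot_iff)
  moreover have "eventually (\<lambda>x. x \<in> {a..b}) (filtermap f U)"
    using f by (simp add: eventually_filtermap)
  ultimately obtain x where x: "inf (nhds x) (filtermap f U) \<noteq> bot"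
    using compact_Icc[of a b] unfolding compact_filter by blast
  have "(f \<longlongrightarrow> x) U"
  proof (rule topological_tendstoI)
    fix S assume S: "open S" "x \<in> S"
    show "eventually (\<lambda>i. f i \<in> S) U"
    proof (rule ccontr)
      assume "\<not> ?thesis"
      then have "eventually (\<lambda>i. f i \<notin> S) U" using U by (auto simp: ultra_def)
      then have "eventually (\<lambda>y. y \<notin> S) (filtermap f U)" by (simp add: eventually_filtermap)
      moreover have "eventually (\<lambda>y. y \<in> S) (nhds x)" using S by (rule eventually_nhds_in_open)
      ultimately have "eventually (\<lambda>y. False) (inf (nhds x) (filtermap f U))"
        unfolding eventually_inf by blast
      then show False using x by (simp add: trivial_limit_def)
    qed
  qed
  then show ?thesis unfolding ulim_def by (rule someI)
qed

lemma ulim_eq: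
  assumes U: "ultra U" and f: "(f \<longlongrightarrow> l) U"
  shows "ulim U f = l"
proof -
  have nb: "U \<noteq> bot" using U by (simp add: ultra_def)
  have "(f \<longlongrightarrow> ulim U f) U" unfolding ulim_def using f by (rule someI)
  then show ?thesis using f nb tendsto_unique by blast
qed

lemma ulim_bounds:
  assumes U: "ultra U" and f: "\<And>i. f i \<in> {a..b}"
  shows "ulim U f \<in> {a..b}"
proof -
  have nb: "U \<noteq> bot" using U by (simp add: ultra_def)
  have t: "(f \<longlongrightarrow> ulim U f) U" by (rule ultra_conv[OF U f])
  have "a \<le> ulim U f" using f by (intro tendsto_lowerbound[OF t _ nb]) (auto)
  moreover have "ulim U f \<le> b" using f by (intro tendsto_upperbound[OF t _ nb]) (auto)
  ultimately show ?thesis by simp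
qed



lemma card_lessSuc:
  "card {k. k < Suc n \<and> R k} = card {k. k < n \<and> R k} + (if R n then 1 else 0)"
proof -
  have "{k. k < Suc n \<and> R k} = {k. k < n \<and> R k} \<union> (if R n then {n} else {})"
    by (auto simp: less_Suc_eq)
  moreover have "finite {k. k < n \<and> R k}" by simp
  ultimately show ?thesis by (auto simp: card_insert_if)
qed

lemma count_first:
  "card {k. k < (n::nat) \<and> Q k \<and> card {j. j < k \<and> Q j} < m} = min m (card {k. k < n \<and> Q k})"
proof (induction n)
  case 0 then show ?case by simp
next
  case (Suc n)
  show ?case
    unfolding card_lessSuc[of n "\<lambda>k. Q k \<and> card {j. j < k \<and> Q j} < m"] card_lessSuc[of n Q] Suc
    by auto
qed

lemma fa_empty:
  assumes P: "fa_probability S P" and sig: "sigma_algebra UNIV S"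
  shows "P {} = 0"
proof -
  interpret s: sigma_algebra UNIV S by (rule sig)
  have "{} \<in> S" by simp
  then have "P ({} \<union> {}) = P {} + P {}" using P unfolding fa_probability_def by blast
  then show ?thesis by simp
qed

lemma fa_sum:
  assumes P: "fa_probability S P" and sig: "sigma_algebra UNIV S"
    and X: "finite X" "X \<subseteq> S" "disjoint X"
  shows "P (\<Union>X) = (\<Sum>C\<in>X. P C)"
  using X
proof (induction X rule: finite_induct)
  case empty then show ?case using fa_empty[OF P sig] by simp
next
  case (insert C X)
  have dX: "disjoint X" using insert.prems(2) by (auto simp: pairwise_def)
  interpret s: sigma_algebra UNIV S by (rule sig)
  have "\<Union>X \<in> S" using insert by (intro s.finite_Union) auto
  moreover have "C \<in> S" using insert by auto
  moreover have "C \<inter> \<Union>X = {}" using insert.prems(2) insert.hyps(2)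
    by (auto simp: pairwise_def disjnt_def)
  ultimately have "P (C \<union> \<Union>X) = P C + P (\<Union>X)" using P by (simp add: fa_probability_def)
  then show ?case using insert dX by simp
qed

lemma countable_in_S:
  fixes S :: "('b::metric_space) set set"
  assumes sig: "sigma_algebra UNIV S" and opens: "\<And>U. open U \<Longrightarrow> U \<in> S"
    and Z: "countable Z"
  shows "Z \<in> S"
proof -
  interpret s: sigma_algebra UNIV S by (rule sig)
  have "{z} \<in> S" for z
  proof -
    have "UNIV - {z} \<in> S" using opens by (simp add: open_Diff)
    then have "UNIV - (UNIV - {z}) \<in> S" by (rule s.compl_sets)
    moreover have "UNIV - (UNIV - {z}) = {z}" by blast
    ultimately show ?thesis by simp
  qed
  then have "\<Union>((\<lambda>z. {z}) ` Z) \<in> S" using Z by (intro s.countable_Union) auto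
  then show ?thesis by simp
qed



definition pre :: "'a set \<Rightarrow> (nat \<Rightarrow> 'a::metric_space) \<Rightarrow> nat \<Rightarrow> nat \<Rightarrow> 'a" where
  "pre D \<omega> n i = (SOME d. d \<in> D \<and> dist d (\<omega> i) < inverse (real n + 1))"

definition hpt :: "'a set \<Rightarrow> 'a \<Rightarrow> 'a \<Rightarrow> (nat \<Rightarrow> 'a::metric_space) \<Rightarrow> nat \<Rightarrow> nat \<Rightarrow> nat \<Rightarrow> 'a" where
  "hpt D x y \<omega> n k = (\<lambda>i. if i < n then pre D \<omega> n i else if i = prod_encode (n,k) then y else x)"

lemma pre_prop:
  assumes "closure D = UNIV"
  shows "pre D \<omega> n i \<in> D \<and> dist (pre D \<omega> n i) (\<omega> i) < inverse (real n + 1)"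
proof -
  have "\<omega> i \<in> closure D" using assms by simp
  then have "\<exists>d\<in>D. dist d (\<omega> i) < inverse (real n + 1)"
    unfolding closure_approachable by (simp add: add_pos_pos)
  then obtain d where "d \<in> D \<and> dist d (\<omega> i) < inverse (real n + 1)" by blast
  then show ?thesis unfolding pre_def by (rule someI)
qed

lemma hpt_pos:
  assumes xy: "x \<noteq> y" and n: "n \<le> n'" and e: "hpt D x y \<omega> n k = hpt D x y \<omega>' n' k'"
  shows "prod_encode (n,k) = prod_encode (n',k')"
proof -
  let ?p' = "prod_encode (n',k')"
  have ge: "n' \<le> ?p'" by (rule le_prod_encode_1)
  have "hpt D x y \<omega> n k ?p' = hpt D x y \<omega>' n' k' ?p'" using e by simp
  then show ?thesis using ge n xy unfolding hpt_def by (auto split: if_splits)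
qed

lemma hpt_inj:
  assumes xy: "x \<noteq> y" and e: "hpt D x y \<omega> n k = hpt D x y \<omega>' n' k'"
  shows "n = n' \<and> k = k' \<and> (\<forall>j. hpt D x y \<omega> n j = hpt D x y \<omega>' n j)"
proof -
  have "prod_encode (n,k) = prod_encode (n',k')"
  proof (cases "n \<le> n'")
    case True show ?thesis by (rule hpt_pos[OF xy True e])
  next
    case False then show ?thesis using hpt_pos[OF xy _ e[symmetric]] by simp
  qed
  then have nk: "n = n'" "k = k'" using prod_encode_eq by auto
  have "pre D \<omega> n i = pre D \<omega>' n i" if "i < n" for i
  proof -
    have "hpt D x y \<omega> n k i = hpt D x y \<omega>' n' k' i" using e by simp
    then show ?thesis using that nk by (simp add: hpt_def)
  qed
  then have "\<forall>j. hpt D x y \<omega> n j = hpt D x y \<omega>' n j" by (auto simp: hpt_def)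
  then show ?thesis using nk by simp
qed

lemma hpt_countable:
  assumes D: "countable D" "closure D = UNIV"
  shows "countable {hpt D x y \<omega> n k | \<omega> n k. True}"
proof -
  define g where "g = (\<lambda>(n::nat, k::nat, xs::'a list). (\<lambda>i. if i < n then xs ! i else if i = prod_encode (n,k) then y else x))"
  have "{hpt D x y \<omega> n k | \<omega> n k. True} \<subseteq> g ` (UNIV \<times> UNIV \<times> lists D)"
  proof
    fix z assume "z \<in> {hpt D x y \<omega> n k | \<omega> n k. True}"
    then obtain \<omega> n k where z: "z = hpt D x y \<omega> n k" by auto
    define xs where "xs = map (pre D \<omega> n) [0..<n]"
    have "xs \<in> lists D" using pre_prop[OF D(2)] by (auto simp: xs_def)
    moreover have "z = g (n, k, xs)" by (auto simp: z g_def xs_def hpt_def)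
    ultimately show "z \<in> g ` (UNIV \<times> UNIV \<times> lists D)" by blast
  qed
  moreover have "countable (g ` (UNIV \<times> UNIV \<times> lists D))"
    using D(1) by (intro countable_image countable_SIGMA countable_lists) auto
  ultimately show ?thesis by (rule countable_subset)
qed

lemma hpt_open:
  fixes U :: "(nat \<Rightarrow> 'a::metric_space) set"
  assumes D: "closure D = UNIV" and U: "open U" "\<omega> \<in> U"
  shows "eventually (\<lambda>n. \<forall>k. hpt D x y \<omega> n k \<in> U) sequentially"
proof -
  have "openin (product_topology (\<lambda>i. euclidean) UNIV) U" "\<omega> \<in> U"
    using U unfolding open_fun_def by auto
  from product_topology_open_contains_basis[OF this]
  obtain X where H: "\<omega> \<in> (\<Pi>\<^sub>E i\<in>UNIV. X i)" "\<And>i. open (X i)"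
     "finite {i. X i \<noteq> UNIV}" "(\<Pi>\<^sub>E i\<in>UNIV. X i) \<subseteq> U"
    by auto
  define J where "J = {i. X i \<noteq> UNIV}"
  have ev: "eventually (\<lambda>n. i < n \<and> (\<forall>a. dist a (\<omega> i) < inverse (real n + 1) \<longrightarrow> a \<in> X i)) sequentially" for i
  proof -
    have "\<omega> i \<in> X i" using H(1) by auto
    then obtain e where e: "e > 0" "\<And>a. dist a (\<omega> i) < e \<Longrightarrow> a \<in> X i"
      using H(2)[of i] unfolding open_dist by (metis dist_commute)
    obtain N where N: "N > 0" "inverse (real N) < e" using ex_inverse_of_nat_less[OF e(1)] by auto
    show ?thesis unfolding eventually_sequentially
    proof (rule exI[of _ "N + i + 1"], intro allI impI)
      fix n assume n: "N + i + 1 \<le> n"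
      have "i < n" using n by simp
      moreover have "\<forall>a. dist a (\<omega> i) < inverse (real n + 1) \<longrightarrow> a \<in> X i"
      proof (intro allI impI)
        fix a assume a: "dist a (\<omega> i) < inverse (real n + 1)"
        have "inverse (real n + 1) \<le> inverse (real N)"
          using n N(1) by (intro le_imp_inverse_le) auto
        then have "dist a (\<omega> i) < e" using a N(2) by linarith
        then show "a \<in> X i" by (rule e(2))
      qed
      ultimately show "i < n \<and> (\<forall>a. dist a (\<omega> i) < inverse (real n + 1) \<longrightarrow> a \<in> X i)" by blast
    qed
  qed
  have "eventually (\<lambda>n. \<forall>i\<in>J. i < n \<and> (\<forall>a. dist a (\<omega> i) < inverse (real n + 1) \<longrightarrow> a \<in> X i)) sequentially"
    using H(3) ev unfolding J_def by (intro eventually_ball_finite) auto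
  then show ?thesis
  proof (rule eventually_mono)
    fix n assume A: "\<forall>i\<in>J. i < n \<and> (\<forall>a. dist a (\<omega> i) < inverse (real n + 1) \<longrightarrow> a \<in> X i)"
    show "\<forall>k. hpt D x y \<omega> n k \<in> U"
    proof
      fix k
      have "hpt D x y \<omega> n k \<in> (\<Pi>\<^sub>E i\<in>UNIV. X i)"
      proof (simp add: PiE_iff, intro allI)
        fix i show "hpt D x y \<omega> n k i \<in> X i"
        proof (cases "i \<in> J")
          case True
          then show ?thesis using A pre_prop[OF D, of \<omega> n i] by (auto simp: hpt_def)
        next
          case False then show ?thesis by (simp add: J_def)
        qed
      qed
      then show "hpt D x y \<omega> n k \<in> U" using H(4) by blast
    qed
  qed
qed



lemma card_lt_le: "card {k. k < (n::nat) \<and> Q k} \<le> n"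
proof -
  have "card {k. k < n \<and> Q k} \<le> card {..<n}" by (rule card_mono) auto
  then show ?thesis by simp
qed

lemma cnt_bound: "real (card {k. k < (n::nat) \<and> Q k}) / real n \<in> {0..1}"
proof (cases "n = 0")
  case True then show ?thesis by simp
next
  case False
  have "real (card {k. k < n \<and> Q k}) \<le> real n" using card_lt_le[of n Q] by simp
  then show ?thesis using False by (simp add: divide_le_eq_1)
qed

lemma card_split:
  assumes "A \<inter> B = {}"
  shows "card {k. k < (n::nat) \<and> f k \<in> A \<union> B} = card {k. k < n \<and> f k \<in> A} + card {k. k < n \<and> f k \<in> B}"
proof -
  have "{k. k < n \<and> f k \<in> A \<union> B} = {k. k < n \<and> f k \<in> A} \<union> {k. k < n \<and> f k \<in> B}" by auto
  moreover have "{k. k < n \<and> f k \<in> A} \<inter> {k. k < n \<and> f k \<in> B} = {}" using assms by auto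
  ultimately show ?thesis by (simp add: card_Un_disjoint)
qed

lemma floor_approx:
  assumes "0 \<le> (t::real)"
  shows "\<bar>real (nat \<lfloor>t\<rfloor>) / real n - t / real n\<bar> \<le> inverse (real n)"
proof (cases "n = 0")
  case True then show ?thesis by simp
next
  case False
  have e: "real (nat \<lfloor>t\<rfloor>) = of_int \<lfloor>t\<rfloor>" using assms by simp
  have "\<bar>real (nat \<lfloor>t\<rfloor>) - t\<bar> \<le> 1" unfolding e
    using of_int_floor_le[of t] real_of_int_floor_gt_diff_one[of t] by linarith
  then have "\<bar>real (nat \<lfloor>t\<rfloor>) - t\<bar> / real n \<le> 1 / real n"
    by (intro divide_right_mono) auto
  moreover have "real (nat \<lfloor>t\<rfloor>) / real n - t / real n = (real (nat \<lfloor>t\<rfloor>) - t) / real n"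
    by (simp add: diff_divide_distrib)
  ultimately show ?thesis by (simp add: abs_divide inverse_eq_divide)
qed

lemma select:
  assumes xy: "x \<noteq> y" and \<alpha>: "0 \<le> \<alpha>" "\<alpha> \<le> 1"
  shows "\<exists>F. F \<subseteq> E \<and> F \<subseteq> {hpt D x y \<omega> n k | \<omega> n k. True} \<and>
     (\<forall>\<omega> n. card {k. k < n \<and> hpt D x y \<omega> n k \<in> F} = nat \<lfloor>\<alpha> * real (card {k. k < n \<and> hpt D x y \<omega> n k \<in> E})\<rfloor>)"
proof -
  define h where "h = hpt D x y"
  define c where "c \<omega> n = card {k. k < n \<and> h \<omega> n k \<in> E}" for \<omega> n
  define m where "m \<omega> n = nat \<lfloor>\<alpha> * real (c \<omega> n)\<rfloor>" for \<omega> n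
  define F where "F = {z\<in>E. \<exists>\<omega> n k. k < n \<and> z = h \<omega> n k \<and> card {j. j < k \<and> h \<omega> n j \<in> E} < m \<omega> n}"
  have row: "{k. k < n \<and> h \<omega> n k \<in> F} = {k. k < n \<and> h \<omega> n k \<in> E \<and> card {j. j < k \<and> h \<omega> n j \<in> E} < m \<omega> n}" for \<omega> n
  proof (intro equalityI subsetI)
    fix k assume "k \<in> {k. k < n \<and> h \<omega> n k \<in> F}"
    then obtain \<omega>' n' k' where k: "k < n" "h \<omega> n k \<in> E" "k' < n'" "h \<omega> n k = h \<omega>' n' k'"
      "card {j. j < k' \<and> h \<omega>' n' j \<in> E} < m \<omega>' n'"
      by (auto simp: F_def)
    from hpt_inj[OF xy k(4)[unfolded h_def]] have inj: "n = n'" "k = k'" "\<forall>j. h \<omega> n j = h \<omega>' n j"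
      by (auto simp: h_def)
    have "card {j. j < k \<and> h \<omega> n j \<in> E} = card {j. j < k' \<and> h \<omega>' n' j \<in> E}"
      using inj by simp
    moreover have "m \<omega> n = m \<omega>' n'" using inj by (simp add: m_def c_def)
    ultimately show "k \<in> {k. k < n \<and> h \<omega> n k \<in> E \<and> card {j. j < k \<and> h \<omega> n j \<in> E} < m \<omega> n}"
      using k by simp
  next
    fix k assume "k \<in> {k. k < n \<and> h \<omega> n k \<in> E \<and> card {j. j < k \<and> h \<omega> n j \<in> E} < m \<omega> n}"
    then show "k \<in> {k. k < n \<and> h \<omega> n k \<in> F}" unfolding F_def by blast
  qed
  have mle: "m \<omega> n \<le> c \<omega> n" for \<omega> n
  proof -
    have "\<alpha> * real (c \<omega> n) \<le> real (c \<omega> n)" using \<alpha> by (simp add: mult_left_le_one_le)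
    then have "\<lfloor>\<alpha> * real (c \<omega> n)\<rfloor> \<le> int (c \<omega> n)" by (simp add: floor_le_iff)
    then show ?thesis unfolding m_def by simp
  qed
  have "card {k. k < n \<and> h \<omega> n k \<in> F} = m \<omega> n" for \<omega> n
    unfolding row count_first c_def[symmetric] using mle[of \<omega> n] by simp
  moreover have "F \<subseteq> E" by (auto simp: F_def)
  moreover have "F \<subseteq> {hpt D x y \<omega> n k | \<omega> n k. True}" by (auto simp: F_def h_def)
  ultimately show ?thesis unfolding m_def c_def h_def by blast
qed



theorem theorem14:
  fixes S :: "(nat \<Rightarrow> 'a::metric_space) set set"
    and P :: "(nat \<Rightarrow> 'a) set \<Rightarrow> real"
  assumes separable: "\<exists>D::'a set. countable D \<and> closure D = UNIV"
    and two_points: "\<exists>x y::'a. x \<noteq> y"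
    and sigma: "sigma_algebra UNIV S"
    and opens: "\<And>U. open U \<Longrightarrow> U \<in> S"
    and P: "fa_probability S P"
  shows "\<exists>Q. fa_probability S Q \<and> strongly_nonatomic S Q \<and>
             (\<forall>U. open U \<longrightarrow> P U \<le> Q U)"
proof -
  obtain D :: "'a set" where D: "countable D" "closure D = UNIV" using separable by blast
  obtain x0 y0 :: 'a where xy: "x0 \<noteq> y0" using two_points by blast
  interpret s: sigma_algebra UNIV S by (rule sigma)
  have P0: "\<And>A. A \<in> S \<Longrightarrow> 0 \<le> P A" and P1: "P UNIV = 1"
    using P by (auto simp: fa_probability_def)
  define h where "h = hpt D x0 y0"
  obtain Fn :: "nat filter" where Fn: "Fn \<le> sequentially" "ultra Fn"
    using ultra_exists[of sequentially] by auto
  have Fnb: "Fn \<noteq> bot" using Fn(2) by (simp add: ultra_def)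
  have evFn: "\<And>Q. eventually Q sequentially \<Longrightarrow> eventually Q Fn" using Fn(1) by (rule filter_leD)
  define cnt where "cnt A \<omega> n = real (card {k. k < n \<and> h \<omega> n k \<in> A}) / real n"
    for A :: "(nat \<Rightarrow> 'a) set" and \<omega> n
  define lam where "lam A \<omega> = ulim Fn (cnt A \<omega>)" for A \<omega>
  have cnt_bd: "cnt A \<omega> n \<in> {0..1}" for A \<omega> n unfolding cnt_def by (rule cnt_bound)
  have lam_conv: "(cnt A \<omega> \<longlongrightarrow> lam A \<omega>) Fn" for A \<omega>
    unfolding lam_def by (rule ultra_conv[OF Fn(2) cnt_bd])
  have lam_bd: "lam A \<omega> \<in> {0..1}" for A \<omega>
    unfolding lam_def by (rule ulim_bounds[OF Fn(2) cnt_bd])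
  have lam_add: "lam (A \<union> B) \<omega> = lam A \<omega> + lam B \<omega>" if "A \<inter> B = {}" for A B \<omega>
  proof -
    have "cnt (A \<union> B) \<omega> = (\<lambda>n. cnt A \<omega> n + cnt B \<omega> n)"
    proof (rule ext)
      fix n
      have "card {k. k < n \<and> h \<omega> n k \<in> A \<union> B} = card {k. k < n \<and> h \<omega> n k \<in> A} + card {k. k < n \<and> h \<omega> n k \<in> B}"
        by (rule card_split[OF that])
      then show "cnt (A \<union> B) \<omega> n = cnt A \<omega> n + cnt B \<omega> n"
        unfolding cnt_def by (simp add: add_divide_distrib)
    qed
    then have "(cnt (A \<union> B) \<omega> \<longlongrightarrow> lam A \<omega> + lam B \<omega>) Fn"
      using tendsto_add[OF lam_conv lam_conv] by simp
    then show ?thesis unfolding lam_def[of "A \<union> B"] by (rule ulim_eq[OF Fn(2)])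
  qed
  have lam_one: "lam A \<omega> = 1" if "eventually (\<lambda>n. \<forall>k. h \<omega> n k \<in> A) sequentially" for A \<omega>
  proof -
    have "eventually (\<lambda>n. cnt A \<omega> n = 1) sequentially"
      using that eventually_gt_at_top[of 0]
    proof (rule eventually_elim2)
      fix n :: nat assume "\<forall>k. h \<omega> n k \<in> A" "0 < n"
      then show "cnt A \<omega> n = 1" by (simp add: cnt_def)
    qed
    then have "(cnt A \<omega> \<longlongrightarrow> 1) Fn" by (intro tendsto_eventually evFn)
    then show ?thesis unfolding lam_def by (rule ulim_eq[OF Fn(2)])
  qed
  have lam_UNIV: "lam UNIV \<omega> = 1" for \<omega> by (rule lam_one) simp
  have lam_open: "lam U \<omega> = 1" if "open U" "\<omega> \<in> U" for U \<omega>
    using hpt_open[OF D(2) that, of x0 y0] unfolding h_def by (intro lam_one) (simp add: h_def)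
  have lam_sel: "\<exists>F\<in>S. F \<subseteq> E \<and> (\<forall>\<omega>. lam F \<omega> = \<alpha> * lam E \<omega>)" if \<alpha>: "0 \<le> \<alpha>" "\<alpha> \<le> 1" for E \<alpha>
  proof -
    obtain F where F: "F \<subseteq> E" "F \<subseteq> {hpt D x0 y0 \<omega> n k | \<omega> n k. True}"
      "\<And>\<omega> n. card {k. k < n \<and> hpt D x0 y0 \<omega> n k \<in> F} = nat \<lfloor>\<alpha> * real (card {k. k < n \<and> hpt D x0 y0 \<omega> n k \<in> E})\<rfloor>"
      using select[OF xy \<alpha>, of E D] by blast
    have "countable F" using F(2) hpt_countable[OF D, of x0 y0] by (rule countable_subset)
    then have FS: "F \<in> S" using countable_in_S[of S F] sigma opens by blast
    have "lam F \<omega> = \<alpha> * lam E \<omega>" for \<omega>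
    proof -
      have "((\<lambda>n. cnt F \<omega> n - \<alpha> * cnt E \<omega> n) \<longlongrightarrow> 0) sequentially"
      proof (rule Lim_null_comparison)
        show "eventually (\<lambda>n. norm (cnt F \<omega> n - \<alpha> * cnt E \<omega> n) \<le> inverse (real n)) sequentially"
        proof (rule always_eventually, rule allI)
          fix n
          have "\<alpha> * cnt E \<omega> n = (\<alpha> * real (card {k. k < n \<and> h \<omega> n k \<in> E})) / real n"
            by (simp add: cnt_def)
          moreover have "cnt F \<omega> n = real (nat \<lfloor>\<alpha> * real (card {k. k < n \<and> h \<omega> n k \<in> E})\<rfloor>) / real n"
            by (simp add: cnt_def F(3) h_def)
          ultimately show "norm (cnt F \<omega> n - \<alpha> * cnt E \<omega> n) \<le> inverse (real n)"
            using floor_approx[of "\<alpha> * real (card {k. k < n \<and> h \<omega> n k \<in> E})" n] \<alpha> by simp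
        qed
        show "((\<lambda>n. inverse (real n)) \<longlongrightarrow> 0) sequentially" by (rule lim_inverse_n)
      qed
      then have "((\<lambda>n. cnt F \<omega> n - \<alpha> * cnt E \<omega> n) \<longlongrightarrow> 0) Fn" using Fn(1) by (rule tendsto_mono[rotated])
      from tendsto_add[OF this tendsto_mult_left[OF lam_conv[of E \<omega>], of \<alpha>]]
      have "(cnt F \<omega> \<longlongrightarrow> \<alpha> * lam E \<omega>) Fn" by simp
      then show ?thesis unfolding lam_def[of F] by (rule ulim_eq[OF Fn(2)])
    qed
    then show ?thesis using FS F(1) by blast
  qed

  define valid where "valid \<pi> c \<longleftrightarrow> finite \<pi> \<and> \<pi> \<subseteq> S \<and> disjoint \<pi> \<and> \<Union>\<pi> = UNIV \<and> (\<forall>C\<in>\<pi>. c C \<in> C)"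
    for \<pi> :: "(nat \<Rightarrow> 'a) set set" and c :: "(nat \<Rightarrow> 'a) set \<Rightarrow> (nat \<Rightarrow> 'a)"
  define Pt where "Pt = {\<pi> :: (nat \<Rightarrow> 'a) set set. finite \<pi> \<and> \<pi> \<subseteq> S \<and> disjoint \<pi> \<and> \<Union>\<pi> = UNIV \<and> {} \<notin> \<pi>}"
  define base where "base \<pi>0 = principal {pc. valid (fst pc) (snd pc) \<and> (\<forall>C\<in>fst pc. \<exists>C0\<in>\<pi>0. C \<subseteq> C0)}"
    for \<pi>0 :: "(nat \<Rightarrow> 'a) set set"
  define Fp where "Fp = (INF \<pi>0\<in>Pt. base \<pi>0)"
  have UPt: "{UNIV} \<in> Pt" by (simp add: Pt_def)
  have dir: "\<exists>x\<in>Pt. base x \<le> inf (base a) (base b)" if ab: "a \<in> Pt" "b \<in> Pt" for a b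
  proof -
    define x where "x = {A \<inter> B | A B. A \<in> a \<and> B \<in> b \<and> A \<inter> B \<noteq> {}}"
    have "finite x"
    proof -
      have "x \<subseteq> (\<lambda>(A, B). A \<inter> B) ` (a \<times> b)" by (auto simp: x_def)
      moreover have "finite (a \<times> b)" using ab by (simp add: Pt_def)
      ultimately show ?thesis by (meson finite_imageI finite_subset)
    qed
    moreover have "x \<subseteq> S" using ab by (auto simp: x_def Pt_def)
    moreover have "disjoint x"
    proof (rule pairwiseI)
      fix X Y assume "X \<in> x" "Y \<in> x" "X \<noteq> Y"
      then obtain A B A' B' where e: "X = A \<inter> B" "Y = A' \<inter> B'" "A \<in> a" "B \<in> b" "A' \<in> a" "B' \<in> b"
        by (auto simp: x_def)
      have "A \<noteq> A' \<or> B \<noteq> B'" using e \<open>X \<noteq> Y\<close> by auto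
      then show "disjnt X Y"
      proof
        assume "A \<noteq> A'"
        then have "disjnt A A'" using ab(1) e by (auto simp: Pt_def pairwise_def)
        then show ?thesis using e by (auto simp: disjnt_def)
      next
        assume "B \<noteq> B'"
        then have "disjnt B B'" using ab(2) e by (auto simp: Pt_def pairwise_def)
        then show ?thesis using e by (auto simp: disjnt_def)
      qed
    qed
    moreover have "\<Union>x = UNIV"
    proof -
      have "z \<in> \<Union>x" for z
      proof -
        have "z \<in> \<Union>a" using ab(1) by (simp add: Pt_def)
        then obtain A where A: "A \<in> a" "z \<in> A" by blast
        have "z \<in> \<Union>b" using ab(2) by (simp add: Pt_def)
        then obtain B where B: "B \<in> b" "z \<in> B" by blast
        show ?thesis using A B by (auto simp: x_def)
      qed
      then show ?thesis by blast
    qed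
    moreover have "{} \<notin> x" by (auto simp: x_def)
    ultimately have "x \<in> Pt" by (simp add: Pt_def)
    moreover have "base x \<le> inf (base a) (base b)"
      unfolding base_def inf_principal principal_le_iff by (auto simp: x_def)
    ultimately show ?thesis by blast
  qed
  have evFp: "eventually Q Fp \<longleftrightarrow> (\<exists>\<pi>0\<in>Pt. eventually Q (base \<pi>0))" for Q
    unfolding Fp_def using UPt dir by (intro eventually_INF_base) auto
  have Fpb: "Fp \<noteq> bot"
  proof
    assume "Fp = bot"
    then have "eventually (\<lambda>_. False) Fp" by simp
    then obtain \<pi>0 where \<pi>0: "\<pi>0 \<in> Pt" "eventually (\<lambda>_. False) (base \<pi>0)" using evFp by blast
    define c0 where "c0 C = (SOME z. z \<in> C)" for C :: "(nat \<Rightarrow> 'a) set"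
    have "c0 C \<in> C" if "C \<in> \<pi>0" for C
    proof -
      have "C \<noteq> {}" using \<pi>0(1) that by (auto simp: Pt_def)
      then show ?thesis unfolding c0_def by (simp add: some_in_eq)
    qed
    then have "valid \<pi>0 c0" using \<pi>0(1) by (simp add: valid_def Pt_def)
    then show False using \<pi>0(2) by (auto simp: base_def eventually_principal)
  qed
  obtain Up where Up: "Up \<le> Fp" "ultra Up" using ultra_exists[OF Fpb] by auto
  have Upb: "Up \<noteq> bot" using Up(2) by (simp add: ultra_def)
  have ev_split: "eventually (\<lambda>pc. valid (fst pc) (snd pc) \<and> (\<forall>C\<in>fst pc. C \<subseteq> A \<or> C \<subseteq> - A)) Up"
    if A: "A \<in> S" for A
  proof -
    define \<pi>0 where "\<pi>0 = {A, - A} - {{}}"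
    have "- A \<in> S" using s.compl_sets[OF A] by (simp add: Compl_eq_Diff_UNIV)
    then have "\<pi>0 \<in> Pt" using A by (auto simp: Pt_def \<pi>0_def pairwise_def disjnt_def)
    moreover have "eventually (\<lambda>pc. valid (fst pc) (snd pc) \<and> (\<forall>C\<in>fst pc. C \<subseteq> A \<or> C \<subseteq> - A)) (base \<pi>0)"
      unfolding base_def eventually_principal \<pi>0_def by blast
    ultimately have "eventually (\<lambda>pc. valid (fst pc) (snd pc) \<and> (\<forall>C\<in>fst pc. C \<subseteq> A \<or> C \<subseteq> - A)) Fp"
      using evFp by blast
    then show ?thesis by (rule filter_leD[OF Up(1)])
  qed

  have psum: "(\<Sum>C\<in>\<pi>. P C) = 1" if "valid \<pi> c" for \<pi> c
  proof -
    have "P (\<Union>\<pi>) = (\<Sum>C\<in>\<pi>. P C)" using that by (intro fa_sum[OF P sigma]) (auto simp: valid_def)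
    then show ?thesis using that P1 by (simp add: valid_def)
  qed
  define ssum where "ssum g pc = (if valid (fst pc) (snd pc) then (\<Sum>C\<in>fst pc. P C * g (snd pc C)) else 0)"
    for g :: "(nat \<Rightarrow> 'a) \<Rightarrow> real" and pc
  have ssum_bd: "ssum g pc \<in> {0..1}" if g: "\<And>\<omega>. g \<omega> \<in> {0..1}" for g pc
  proof (cases "valid (fst pc) (snd pc)")
    case False then show ?thesis by (simp add: ssum_def)
  next
    case True
    have PC: "\<And>C. C \<in> fst pc \<Longrightarrow> 0 \<le> P C" using True P0 by (auto simp: valid_def)
    have "0 \<le> (\<Sum>C\<in>fst pc. P C * g (snd pc C))"
      using PC g by (intro sum_nonneg mult_nonneg_nonneg) auto
    moreover have "(\<Sum>C\<in>fst pc. P C * g (snd pc C)) \<le> (\<Sum>C\<in>fst pc. P C)"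
      using PC g by (intro sum_mono mult_left_le) auto
    ultimately show ?thesis using True psum[OF True] by (simp add: ssum_def)
  qed
  have ssum_add: "ssum (\<lambda>\<omega>. g \<omega> + g' \<omega>) pc = ssum g pc + ssum g' pc" for g g' pc
    by (simp add: ssum_def distrib_left sum.distrib)
  have ssum_scale: "ssum (\<lambda>\<omega>. a * g \<omega>) pc = a * ssum g pc" for a g pc
    by (simp add: ssum_def sum_distrib_left mult_ac)
  have ssum_ind: "ssum (\<lambda>\<omega>. if \<omega> \<in> A then 1 else 0) pc = P A"
    if A: "A \<in> S" and v: "valid (fst pc) (snd pc)" and sp: "\<forall>C\<in>fst pc. C \<subseteq> A \<or> C \<subseteq> - A" for A pc
  proof -
    let ?\<pi> = "fst pc" and ?c = "snd pc"
    have "(\<Sum>C\<in>?\<pi>. P C * (if ?c C \<in> A then 1 else 0)) = (\<Sum>C\<in>?\<pi>. if C \<subseteq> A then P C else 0)"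
    proof (rule sum.cong)
      fix C assume C: "C \<in> ?\<pi>"
      have "?c C \<in> C" using v C by (simp add: valid_def)
      then have "?c C \<in> A \<longleftrightarrow> C \<subseteq> A" using sp C by auto
      then show "P C * (if ?c C \<in> A then 1 else 0) = (if C \<subseteq> A then P C else 0)" by simp
    qed simp
    also have "\<dots> = (\<Sum>C\<in>{C\<in>?\<pi>. C \<subseteq> A}. P C)"
      using v by (simp add: sum.inter_filter valid_def)
    also have "\<dots> = P (\<Union>{C\<in>?\<pi>. C \<subseteq> A})"
    proof -
      have "disjoint {C\<in>?\<pi>. C \<subseteq> A}" using v by (auto simp: valid_def pairwise_def)
      then show ?thesis using v by (intro fa_sum[OF P sigma, symmetric]) (auto simp: valid_def)
    qed
    also have "\<Union>{C\<in>?\<pi>. C \<subseteq> A} = A"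
    proof
      show "A \<subseteq> \<Union>{C\<in>?\<pi>. C \<subseteq> A}"
      proof
        fix z assume z: "z \<in> A"
        have "z \<in> \<Union>?\<pi>" using v by (simp add: valid_def)
        then obtain C where "C \<in> ?\<pi>" "z \<in> C" by blast
        then show "z \<in> \<Union>{C\<in>?\<pi>. C \<subseteq> A}" using sp z by blast
      qed
    qed blast
    finally show ?thesis using v by (simp add: ssum_def)
  qed
  have ev_valid: "eventually (\<lambda>pc. valid (fst pc) (snd pc)) Up"
    using ev_split[of UNIV] by (auto elim: eventually_mono)
  define Q where "Q A = ulim Up (ssum (lam A))" for A
  have Q_conv: "(ssum (lam A) \<longlongrightarrow> Q A) Up" for A
    unfolding Q_def by (rule ultra_conv[OF Up(2) ssum_bd[OF lam_bd]])
  have Q_bd: "Q A \<in> {0..1}" for A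
    unfolding Q_def by (rule ulim_bounds[OF Up(2) ssum_bd[OF lam_bd]])
  have Q_add: "Q (A \<union> B) = Q A + Q B" if "A \<inter> B = {}" for A B
  proof -
    have "ssum (lam (A \<union> B)) = (\<lambda>pc. ssum (lam A) pc + ssum (lam B) pc)"
      using lam_add[OF that] ssum_add by presburger
    then have "(ssum (lam (A \<union> B)) \<longlongrightarrow> Q A + Q B) Up"
      using tendsto_add[OF Q_conv Q_conv] by simp
    then show ?thesis unfolding Q_def[of "A \<union> B"] by (rule ulim_eq[OF Up(2)])
  qed
  have Q_UNIV: "Q UNIV = 1"
  proof -
    have "eventually (\<lambda>pc. ssum (lam UNIV) pc = 1) Up"
      using ev_valid by (rule eventually_mono) (simp add: ssum_def lam_UNIV psum)
    then have "(ssum (lam UNIV) \<longlongrightarrow> 1) Up" by (rule tendsto_eventually)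
    then show ?thesis unfolding Q_def by (rule ulim_eq[OF Up(2)])
  qed
  have Q_open: "P U \<le> Q U" if U: "open U" for U
  proof -
    have US: "U \<in> S" using opens[OF U] .
    have "eventually (\<lambda>pc. P U \<le> ssum (lam U) pc) Up"
      using ev_split[OF US]
    proof (rule eventually_mono)
      fix pc assume pc: "valid (fst pc) (snd pc) \<and> (\<forall>C\<in>fst pc. C \<subseteq> U \<or> C \<subseteq> - U)"
      have "P U = ssum (\<lambda>\<omega>. if \<omega> \<in> U then 1 else 0) pc" using ssum_ind[OF US] pc by simp
      also have "\<dots> \<le> ssum (lam U) pc"
      proof -
        have PC: "\<And>C. C \<in> fst pc \<Longrightarrow> 0 \<le> P C" using pc P0 by (auto simp: valid_def)
        have le: "(if \<omega> \<in> U then 1 else 0) \<le> lam U \<omega>" for \<omega>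
          using lam_open[OF U, of \<omega>] lam_bd[of U \<omega>] by auto
        show ?thesis using pc PC le unfolding ssum_def by (auto intro!: sum_mono mult_left_mono)
      qed
      finally show "P U \<le> ssum (lam U) pc" .
    qed
    then show ?thesis by (intro tendsto_lowerbound[OF Q_conv _ Upb])
  qed
  have Q_sna: "strongly_nonatomic S Q"
    unfolding strongly_nonatomic_def
  proof (intro ballI allI impI)
    fix E and \<alpha> :: real assume E: "E \<in> S" and \<alpha>: "0 \<le> \<alpha> \<and> \<alpha> \<le> 1"
    obtain F where F: "F \<in> S" "F \<subseteq> E" "\<And>\<omega>. lam F \<omega> = \<alpha> * lam E \<omega>"
      using lam_sel[of \<alpha> E] \<alpha> by blast
    have "ssum (lam F) = (\<lambda>pc. \<alpha> * ssum (lam E) pc)"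
      using F(3) ssum_scale by presburger
    then have "(ssum (lam F) \<longlongrightarrow> \<alpha> * Q E) Up"
      using tendsto_mult_left[OF Q_conv[of E], of \<alpha>] by simp
    then have "Q F = \<alpha> * Q E" unfolding Q_def[of F] by (rule ulim_eq[OF Up(2)])
    then show "\<exists>F\<in>S. F \<subseteq> E \<and> Q F = \<alpha> * Q E" using F by blast
  qed
  have "fa_probability S Q"
    unfolding fa_probability_def using Q_bd Q_UNIV Q_add by auto
  then show ?thesis using Q_sna Q_open by blast
qed

end
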